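(* For unit activation costs, in every game under the coordination mechanism described in the context, for every optimal assignment $s^*$ there exists a payment vector $\xi$ such that $(s^*,\xi)$ is a Nash equilibrium.
   Context: Unit activation costs means $c(0)=0$ and $c(l)=1$ for every integer $l>0$. A game consists of the cost function $c$, slots $t=1,\dots,T$, and a set of jobs, each job $j$ having integer release time $r_j$ and deadline $d_j$ with $0<r_j<d_j<T$. An assignment $s$ gives each job a slot $s_j$ with $r_j\le s_j<d_j$; the load is $l_t(s)=|\{j:s_j=t\}|$ and $C(s)=\sum_{t=1}^T c(l_t(s))$; an optimal assignment minimizes $C$. In the coordination mechanism, each job $j$ chooses a pair $(s_j,\xi_j)$ with $s_j\in[r_j,d_j)$ and payment $\xi_j\ge0$. Slot $t$ is opened iff $\sum_{j:s_j=t}\xi_j\ge c(l_t(s))$; a job whose slot is not opened has infinite cost, otherwise its cost is $\xi_j$. A profile $(s,\xi)$ is a Nash equilibrium if for every job $j$: (i) $\sum_{j':s_{j'}=s_j}\xi_{j'}\ge c(l_{s_j}(s))$; (ii) for every $t\in[r_j,d_j)\setminus\{s_j\}$, $\xi_j\le\max\{0,\,c(l_t(s)+1)-\sum_{j':s_{j'}=t}\xi_{j'}\}$; (iii) $\xi_j\le\max\{0,\,c(l_{s_j}(s))-\sum_{j':s_{j'}=s_j,\,j'\ne j}\xi_{j'}\}$. *)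

theory Defs
  imports Complex_Main
begin

definition unit_cost :: "nat \<Rightarrow> real" where
  "unit_cost l = (if l = 0 then 0 else 1)"

definition valid_game :: "nat \<Rightarrow> 'j set \<Rightarrow> ('j \<Rightarrow> nat) \<Rightarrow> ('j \<Rightarrow> nat) \<Rightarrow> bool" where
  "valid_game T J r d \<longleftrightarrow> finite J \<and> (\<forall>j\<in>J. 0 < r j \<and> r j < d j \<and> d j < T)"

definition feasible :: "'j set \<Rightarrow> ('j \<Rightarrow> nat) \<Rightarrow> ('j \<Rightarrow> nat) \<Rightarrow> ('j \<Rightarrow> nat) \<Rightarrow> bool" where
  "feasible J r d s \<longleftrightarrow> (\<forall>j\<in>J. r j \<le> s j \<and> s j < d j)"

definition load :: "'j set \<Rightarrow> ('j \<Rightarrow> nat) \<Rightarrow> nat \<Rightarrow> nat" where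
  "load J s t = card {j\<in>J. s j = t}"

definition total_cost :: "(nat \<Rightarrow> real) \<Rightarrow> nat \<Rightarrow> 'j set \<Rightarrow> ('j \<Rightarrow> nat) \<Rightarrow> real" where
  "total_cost c T J s = (\<Sum>t\<in>{1..T}. c (load J s t))"

definition optimal_assignment ::
  "(nat \<Rightarrow> real) \<Rightarrow> nat \<Rightarrow> 'j set \<Rightarrow> ('j \<Rightarrow> nat) \<Rightarrow> ('j \<Rightarrow> nat) \<Rightarrow> ('j \<Rightarrow> nat) \<Rightarrow> bool" where
  "optimal_assignment c T J r d s \<longleftrightarrow> feasible J r d s \<and>
     (\<forall>s'. feasible J r d s' \<longrightarrow> total_cost c T J s \<le> total_cost c T J s')"

definition paid :: "'j set \<Rightarrow> ('j \<Rightarrow> nat) \<Rightarrow> ('j \<Rightarrow> real) \<Rightarrow> nat \<Rightarrow> real" where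
  "paid J s \<xi> t = (\<Sum>j'\<in>{j'\<in>J. s j' = t}. \<xi> j')"

text \<open>Nash equilibrium of the coordination mechanism, profile (s, xi):
  strategies are pairs (s j, xi j) with s j in [r j, d j) and xi j \<ge> 0,
  and conditions (i)-(iii) of the paper hold for every job.\<close>
definition nash_equilibrium ::
  "(nat \<Rightarrow> real) \<Rightarrow> 'j set \<Rightarrow> ('j \<Rightarrow> nat) \<Rightarrow> ('j \<Rightarrow> nat) \<Rightarrow> ('j \<Rightarrow> nat) \<Rightarrow> ('j \<Rightarrow> real) \<Rightarrow> bool" where
  "nash_equilibrium c J r d s \<xi> \<longleftrightarrow>
     feasible J r d s \<and> (\<forall>j\<in>J. \<xi> j \<ge> 0) \<and>
     (\<forall>j\<in>J.
        paid J s \<xi> (s j) \<ge> c (load J s (s j)) \<and>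
        (\<forall>t. r j \<le> t \<and> t < d j \<and> t \<noteq> s j \<longrightarrow>
              \<xi> j \<le> max 0 (c (load J s t + 1) - paid J s \<xi> t)) \<and>
        \<xi> j \<le> max 0 (c (load J s (s j)) - (\<Sum>j'\<in>{j'\<in>J. s j' = s j \<and> j' \<noteq> j}. \<xi> j')))"

end

theory Submission
  imports Defs
begin

lemma load_zero_iff:
  assumes "finite J" shows "load J s t = 0 \<longleftrightarrow> (\<forall>j\<in>J. s j \<noteq> t)"
  using assms unfolding load_def by auto

lemma exists_good:
  fixes T :: nat and J :: "'j set" and r d s :: "'j \<Rightarrow> nat"
  assumes vg: "valid_game T J r d"
    and opt: "optimal_assignment unit_cost T J r d s"
    and j0: "j0 \<in> J"
  shows "\<exists>j\<in>J. s j = s j0 \<and> (\<forall>t'. r j \<le> t' \<and> t' < d j \<and> t' \<noteq> s j \<longrightarrow> load J s t' = 0)"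
proof (rule ccontr)
  assume neg: "\<not> ?thesis"
  define u where "u = s j0"
  have fin: "finite J" using vg unfolding valid_game_def by auto
  have feas: "feasible J r d s" using opt unfolding optimal_assignment_def by auto
  have alt: "\<forall>j\<in>J. s j = u \<longrightarrow> (\<exists>t'. r j \<le> t' \<and> t' < d j \<and> t' \<noteq> u \<and> load J s t' \<noteq> 0)"
    using neg unfolding u_def by auto
  define s' where "s' j = (if s j = u then (SOME t'. r j \<le> t' \<and> t' < d j \<and> t' \<noteq> u \<and> load J s t' \<noteq> 0) else s j)" for j
  have s'P: "r j \<le> s' j \<and> s' j < d j \<and> s' j \<noteq> u \<and> load J s (s' j) \<noteq> 0" if "j \<in> J" "s j = u" for j
    using someI_ex[OF alt[rule_format, OF that]] that unfolding s'_def by auto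
  have feas': "feasible J r d s'"
    using feas s'P unfolding feasible_def by (metis s'_def)
  have u_range: "u \<in> {1..T}"
    using vg feas j0 unfolding valid_game_def feasible_def u_def by force
  have le: "unit_cost (load J s' t) \<le> unit_cost (load J s t)" for t
  proof (cases "load J s t = 0")
    case True
    have "\<forall>j\<in>J. s' j \<noteq> t"
    proof
      fix j assume "j \<in> J"
      show "s' j \<noteq> t"
      proof (cases "s j = u")
        case True thus ?thesis using s'P[OF \<open>j\<in>J\<close>] \<open>load J s t = 0\<close> by auto
      next
        case False thus ?thesis using \<open>load J s t = 0\<close> \<open>j\<in>J\<close> fin load_zero_iff[of J s t]
          unfolding s'_def by auto
      qed
    qed
    hence "load J s' t = 0" using load_zero_iff[OF fin] by auto
    thus ?thesis unfolding unit_cost_def by auto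
  next
    case False thus ?thesis unfolding unit_cost_def by auto
  qed
  have "\<forall>j\<in>J. s' j \<noteq> u" using s'P unfolding s'_def by auto
  hence "load J s' u = 0" using load_zero_iff[OF fin] by auto
  moreover have "load J s u \<noteq> 0" using load_zero_iff[OF fin] j0 u_def by auto
  ultimately have lt: "unit_cost (load J s' u) < unit_cost (load J s u)" unfolding unit_cost_def by auto
  have "total_cost unit_cost T J s' < total_cost unit_cost T J s"
    unfolding total_cost_def
    by (rule sum_strict_mono_ex1) (use le lt u_range in auto)
  moreover have "total_cost unit_cost T J s \<le> total_cost unit_cost T J s'"
    using opt feas' unfolding optimal_assignment_def by auto
  ultimately show False by simp
qed

theorem theorem4:
  fixes T :: nat and J :: "'j set" and r d s :: "'j \<Rightarrow> nat"
  assumes "valid_game T J r d"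
    and "optimal_assignment unit_cost T J r d s"
  shows "\<exists>\<xi> :: 'j \<Rightarrow> real. nash_equilibrium unit_cost J r d s \<xi>"
proof -
  have fin: "finite J" using assms(1) unfolding valid_game_def by auto
  have feas: "feasible J r d s" using assms(2) unfolding optimal_assignment_def by auto
  define good where "good j \<longleftrightarrow> (\<forall>t'. r j \<le> t' \<and> t' < d j \<and> t' \<noteq> s j \<longrightarrow> load J s t' = 0)" for j
  define p where "p u = (SOME j. j \<in> J \<and> s j = u \<and> good j)" for u
  have pP: "p (s j) \<in> J \<and> s (p (s j)) = s j \<and> good (p (s j))" if "j \<in> J" for j
  proof -
    have "\<exists>j'. j' \<in> J \<and> s j' = s j \<and> good j'"
      using exists_good[OF assms that] unfolding good_def by blast
    from someI_ex[OF this] show ?thesis unfolding p_def .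
  qed
  define \<xi> where "\<xi> j = (if j = p (s j) then 1 else (0::real))" for j
  have paid1: "paid J s \<xi> (s j) = 1" if "j \<in> J" for j
  proof -
    have "paid J s \<xi> (s j) = (\<Sum>j'\<in>{j'\<in>J. s j' = s j}. if j' = p (s j) then 1 else 0)"
      unfolding paid_def \<xi>_def by (rule sum.cong) auto
    also have "\<dots> = 1" using fin pP[OF that] by (simp add: sum.delta[of _ "p (s j)"] sum.inter_filter[symmetric])
    finally show ?thesis .
  qed
  have others: "(\<Sum>j'\<in>{j'\<in>J. s j' = s j \<and> j' \<noteq> j}. \<xi> j') = 0" if "j \<in> J" "j = p (s j)" for j
    using that unfolding \<xi>_def by (intro sum.neutral) auto
  have loadpos: "load J s (s j) \<noteq> 0" if "j \<in> J" for j
    using load_zero_iff[OF fin] that by auto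
  have "nash_equilibrium unit_cost J r d s \<xi>"
    unfolding nash_equilibrium_def
  proof (intro conjI ballI allI impI)
    show "feasible J r d s" by fact
  next
    fix j assume "j \<in> J" thus "0 \<le> \<xi> j" unfolding \<xi>_def by auto
  next
    fix j assume j: "j \<in> J"
    show "unit_cost (load J s (s j)) \<le> paid J s \<xi> (s j)"
      using paid1[OF j] unfolding unit_cost_def by auto
  next
    fix j t assume j: "j \<in> J" and t: "r j \<le> t \<and> t < d j \<and> t \<noteq> s j"
    show "\<xi> j \<le> max 0 (unit_cost (load J s t + 1) - paid J s \<xi> t)"
    proof (cases "j = p (s j)")
      case True
      have "load J s t = 0" using pP[OF j] True t unfolding good_def by metis
      hence "{j'\<in>J. s j' = t} = {}" using load_zero_iff[OF fin] by auto
      hence "paid J s \<xi> t = 0" unfolding paid_def by (metis sum.empty)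
      thus ?thesis unfolding unit_cost_def \<xi>_def by auto
    next
      case False thus ?thesis unfolding \<xi>_def by auto
    qed
  next
    fix j assume j: "j \<in> J"
    show "\<xi> j \<le> max 0 (unit_cost (load J s (s j)) - (\<Sum>j'\<in>{j'\<in>J. s j' = s j \<and> j' \<noteq> j}. \<xi> j'))"
    proof (cases "j = p (s j)")
      case True thus ?thesis using others[OF j True] loadpos[OF j] unfolding unit_cost_def \<xi>_def by auto
    next
      case False thus ?thesis unfolding \<xi>_def by auto
    qed
  qed
  thus ?thesis by blast
qed

end
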